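(* Let $E$ be a Banach lattice and let $\mathrm{l\text{-}Lwc}(E)$ denote the set of limitedly L-weakly compact operators $E\to E$. Then $\mathrm{l\text{-}Lwc}(E)$ is a norm-closed right ideal in the algebra $\mathrm{L}(E)$ of all bounded operators on $E$ (that is, a closed linear subspace such that $TS\in\mathrm{l\text{-}Lwc}(E)$ whenever $T\in\mathrm{l\text{-}Lwc}(E)$ and $S\in\mathrm{L}(E)$), and hence a subalgebra of $\mathrm{L}(E)$; moreover, this subalgebra is unital if and only if the identity operator $I_E$ is limitedly L-weakly compact.
   Context: All vector spaces are real and operators are linear and bounded. For a subset $A$ of a Banach lattice $F$, $\mathrm{sol}(A)=\bigcup_{a\in A}[-|a|,|a|]$. A subset $A\subseteq F$ is an Lwc-set if every disjoint sequence in $\mathrm{sol}(A)$ is norm-null. A bounded subset $A$ of a Banach space $X$ is limited if every weak$^\ast$-null sequence in $X'$ converges to $0$ uniformly on $A$. An operator $T:X\to F$ is limitedly L-weakly compact if $T$ maps every limited subset of $X$ onto an Lwc-subset of $F$. *)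

theory Defs
  imports "HOL-Analysis.Analysis"
begin

class banach_lattice = banach + ordered_real_vector + lattice +
  assumes lattice_norm: "sup x (- x) \<le> sup y (- y) \<Longrightarrow> norm x \<le> norm y"

definition labs :: "'a::banach_lattice \<Rightarrow> 'a" where
  "labs x = sup x (- x)"

definition sol :: "'a::banach_lattice set \<Rightarrow> 'a set" where
  "sol A = (\<Union>a\<in>A. {y. - labs a \<le> y \<and> y \<le> labs a})"

definition disjoint_seq :: "(nat \<Rightarrow> 'a::banach_lattice) \<Rightarrow> bool" where
  "disjoint_seq x \<longleftrightarrow> (\<forall>n m. n \<noteq> m \<longrightarrow> inf (labs (x n)) (labs (x m)) = 0)"

definition Lwc_set :: "'a::banach_lattice set \<Rightarrow> bool" where
  "Lwc_set A \<longleftrightarrow> (\<forall>x. disjoint_seq x \<and> (\<forall>n. x n \<in> sol A) \<longrightarrow> x \<longlonglongrightarrow> 0)"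

text \<open>Limited set: bounded, and every weak-star null sequence of the dual
  converges to 0 uniformly on A.\<close>
definition limited_set :: "'a::real_normed_vector set \<Rightarrow> bool" where
  "limited_set A \<longleftrightarrow> bounded A \<and>
     (\<forall>f :: nat \<Rightarrow> 'a \<Rightarrow> real.
        (\<forall>n. bounded_linear (f n)) \<and> (\<forall>x. (\<lambda>n. f n x) \<longlonglongrightarrow> 0) \<longrightarrow>
        (\<forall>e>0. \<forall>\<^sub>F n in sequentially. \<forall>a\<in>A. \<bar>f n a\<bar> < e))"

definition limitedly_L_weakly_compact :: "('a::real_normed_vector \<Rightarrow> 'b::banach_lattice) \<Rightarrow> bool" where
  "limitedly_L_weakly_compact T \<longleftrightarrow> bounded_linear T \<and>
     (\<forall>A. limited_set A \<longrightarrow> Lwc_set (T ` A))"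

definition lLwc :: "('a::banach_lattice \<Rightarrow>\<^sub>L 'a) set" where
  "lLwc = {T. limitedly_L_weakly_compact (blinfun_apply T)}"

end

theory Submission
  imports Defs
begin

lemma labs_nonneg: "0 \<le> labs (x::'a::banach_lattice)"
proof -
  have "x \<le> labs x" "-x \<le> labs x" by (simp_all add: labs_def)
  hence "x + -x \<le> labs x + labs x" by (rule add_mono)
  hence "0 \<le> (2::real) *\<^sub>R labs x" by (simp add: scaleR_2)
  thus ?thesis by (simp add: zero_le_scaleR_iff)
qed

lemma labs_of_nonneg: "0 \<le> (x::'a::banach_lattice) \<Longrightarrow> labs x = x"
proof -
  assume "0 \<le> x"
  hence "-x \<le> x" using order_trans[of "-x" 0 x] by simp
  thus ?thesis by (simp add: labs_def sup_absorb1)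
qed

lemma norm_mono_labs: "labs (x::'a::banach_lattice) \<le> labs y \<Longrightarrow> norm x \<le> norm y"
  unfolding labs_def by (rule lattice_norm)

lemma norm_labs: "norm (labs (x::'a::banach_lattice)) = norm x"
proof -
  have e: "labs (labs x) = labs x" by (simp add: labs_of_nonneg labs_nonneg)
  show ?thesis
    by (rule antisym; rule norm_mono_labs; simp add: e)
qed

lemma labs_le_of_sol: "- labs w \<le> (y::'a::banach_lattice) \<Longrightarrow> y \<le> labs w \<Longrightarrow> labs y \<le> labs w"
  unfolding labs_def by (simp add: minus_le_iff)

lemma labs_add: "labs ((b::'a::banach_lattice) + c) \<le> labs b + labs c"
proof -
  have "b + c \<le> labs b + labs c" by (rule add_mono; simp add: labs_def)
  moreover have "-(b + c) \<le> labs b + labs c"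
  proof -
    have "-b + -c \<le> labs b + labs c" by (rule add_mono; simp add: labs_def)
    thus ?thesis by (simp add: add.commute)
  qed
  ultimately show ?thesis by (simp add: labs_def)
qed

lemma key:
  fixes y b c :: "nat \<Rightarrow> 'a::banach_lattice"
  assumes dj: "disjoint_seq y" and le: "\<forall>n. labs (y n) \<le> labs (b n) + labs (c n)"
    and B: "Lwc_set B" and bB: "\<forall>n. b n \<in> B"
  shows "\<exists>(z::nat \<Rightarrow> 'a) (w::nat \<Rightarrow> 'a). z \<longlonglongrightarrow> 0 \<and> disjoint_seq w \<and> (\<forall>n. 0 \<le> w n \<and> w n \<le> labs (c n))
     \<and> (\<forall>n. norm (y n) \<le> norm (z n) + norm (w n))"
proof -
  define z where "z n = inf (labs (y n)) (labs (b n))" for n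
  define w where "w n = labs (y n) - z n" for n
  have z0: "0 \<le> z n" for n by (simp add: z_def labs_nonneg)
  have zy: "z n \<le> labs (y n)" "z n \<le> labs (b n)" for n by (simp_all add: z_def)
  have w0: "0 \<le> w n" for n using zy by (simp add: w_def)
  have wc: "w n \<le> labs (c n)" for n
  proof -
    have "labs (y n) - labs (c n) \<le> labs (y n)" using labs_nonneg[of "c n"] by simp
    moreover have "labs (y n) - labs (c n) \<le> labs (b n)" using le[rule_format, of n]
      by (simp add: diff_le_eq)
    ultimately have "labs (y n) - labs (c n) \<le> z n" by (simp add: z_def)
    thus ?thesis by (simp add: w_def diff_le_eq le_diff_eq add.commute)
  qed
  have wy: "w n \<le> labs (y n)" for n using z0 by (simp add: w_def)
  have djgen: "disjoint_seq v" if v: "\<forall>n. 0 \<le> v n \<and> v n \<le> labs (y n)" for v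
    unfolding disjoint_seq_def
  proof (intro allI impI)
    fix n m :: nat assume "n \<noteq> m"
    have "inf (labs (v n)) (labs (v m)) = inf (v n) (v m)" using v by (simp add: labs_of_nonneg)
    also have "\<dots> \<le> inf (labs (y n)) (labs (y m))" by (rule inf_mono) (use v in blast)+
    also have "\<dots> = 0" using dj \<open>n \<noteq> m\<close> by (simp add: disjoint_seq_def)
    finally have "inf (labs (v n)) (labs (v m)) \<le> 0" .
    moreover have "0 \<le> inf (labs (v n)) (labs (v m))" by (simp add: labs_nonneg)
    ultimately show "inf (labs (v n)) (labs (v m)) = 0" by (rule antisym)
  qed
  have zsol: "z n \<in> sol B" for n
    unfolding sol_def
  proof (rule UN_I[OF bB[rule_format, of n]])
    have "- labs (b n) \<le> 0" using labs_nonneg[of "b n"] by simp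
    then show "z n \<in> {ya. - labs (b n) \<le> ya \<and> ya \<le> labs (b n)}"
      using z0[of n] zy(2)[of n] order_trans by blast
  qed
  have "\<forall>n. 0 \<le> z n \<and> z n \<le> labs (y n)" by (intro allI conjI z0 zy(1))
  hence "disjoint_seq z \<and> (\<forall>n. z n \<in> sol B)" using djgen[of z] zsol by blast
  from B[unfolded Lwc_set_def, rule_format, OF this] have zl: "z \<longlonglongrightarrow> 0" .
  have wd: "disjoint_seq w" by (intro djgen allI conjI w0 wy)
  have nm: "norm (y n) \<le> norm (z n) + norm (w n)" for n
  proof -
    have "z n + w n = labs (y n)" by (simp add: w_def)
    hence "norm (y n) = norm (z n + w n)" using norm_labs[of "y n"] by simp
    thus ?thesis using norm_triangle_ineq by simp
  qed
  have "z \<longlonglongrightarrow> 0 \<and> disjoint_seq w \<and> (\<forall>n. 0 \<le> w n \<and> w n \<le> labs (c n))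
     \<and> (\<forall>n. norm (y n) \<le> norm (z n) + norm (w n))"
    using zl wd w0 wc nm by simp
  thus ?thesis by blast
qed

lemma lLwc_iff: "T \<in> lLwc \<longleftrightarrow> (\<forall>A. limited_set A \<longrightarrow> Lwc_set (blinfun_apply T ` A))"
  by (simp add: lLwc_def limitedly_L_weakly_compact_def blinfun.bounded_linear_right)

lemma limited_image:
  assumes S: "bounded_linear S" and A: "limited_set A"
  shows "limited_set (S ` A)"
  unfolding limited_set_def
proof (intro conjI allI impI)
  show "bounded (S ` A)" using A S bounded_linear_image limited_set_def by blast
next
  fix f :: "nat \<Rightarrow> 'b \<Rightarrow> real" and e :: real
  assume f: "(\<forall>n. bounded_linear (f n)) \<and> (\<forall>x. (\<lambda>n. f n x) \<longlonglongrightarrow> 0)" and e: "0 < e"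
  have "(\<forall>n. bounded_linear ((\<lambda>n. f n \<circ> S) n)) \<and> (\<forall>x. (\<lambda>n. (\<lambda>n. f n \<circ> S) n x) \<longlonglongrightarrow> 0)"
    using f S bounded_linear_compose by (auto simp: o_def)
  hence "\<forall>\<^sub>F n in sequentially. \<forall>a\<in>A. \<bar>(f n \<circ> S) a\<bar> < e"
    using A e unfolding limited_set_def by (elim conjE allE[of _ "\<lambda>n. f n \<circ> S"]) simp
  thus "\<forall>\<^sub>F n in sequentially. \<forall>a\<in>S ` A. \<bar>f n a\<bar> < e"
    by (auto elim!: eventually_mono)
qed

lemma sol_pick:
  assumes "\<forall>n. y n \<in> sol (g ` A)"
  shows "\<exists>a. \<forall>n. a n \<in> A \<and> labs (y n) \<le> labs (g (a n))"
proof -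
  have "\<forall>n. \<exists>a. a \<in> A \<and> labs (y n) \<le> labs (g a)"
  proof
    fix n
    obtain a where "a \<in> A" "- labs (g a) \<le> y n" "y n \<le> labs (g a)"
      using assms unfolding sol_def by blast
    thus "\<exists>a. a \<in> A \<and> labs (y n) \<le> labs (g a)" using labs_le_of_sol by blast
  qed
  thus ?thesis by (rule choice)
qed

lemma comp_closed:
  assumes T: "T \<in> lLwc" shows "T o\<^sub>L S \<in> lLwc"
  unfolding lLwc_iff
proof (intro allI impI)
  fix A :: "'a set" assume A: "limited_set A"
  have "limited_set (blinfun_apply S ` A)"
    using limited_image[OF blinfun.bounded_linear_right A] .
  hence "Lwc_set (blinfun_apply T ` (blinfun_apply S ` A))" using T lLwc_iff by blast
  thus "Lwc_set (blinfun_apply (T o\<^sub>L S) ` A)" by (simp add: image_image)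
qed

lemma add_closed:
  assumes T1: "T1 \<in> lLwc" and T2: "T2 \<in> lLwc" shows "T1 + T2 \<in> lLwc"
  unfolding lLwc_iff
proof (intro allI impI)
  fix A :: "'a set" assume A: "limited_set A"
  have B1: "Lwc_set (blinfun_apply T1 ` A)" using T1 A lLwc_iff by blast
  have B2: "Lwc_set (blinfun_apply T2 ` A)" using T2 A lLwc_iff by blast
  show "Lwc_set (blinfun_apply (T1 + T2) ` A)"
    unfolding Lwc_set_def
  proof (intro allI impI)
    fix y assume y: "disjoint_seq y \<and> (\<forall>n. y n \<in> sol (blinfun_apply (T1 + T2) ` A))"
    then obtain a where a: "\<forall>n. a n \<in> A \<and> labs (y n) \<le> labs (blinfun_apply (T1 + T2) (a n))"
      using sol_pick by blast
    have le: "\<forall>n. labs (y n) \<le> labs (T1 (a n)) + labs (T2 (a n))"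
    proof
      fix n
      have "labs (y n) \<le> labs (T1 (a n) + T2 (a n))" using a by (simp add: plus_blinfun.rep_eq)
      also have "\<dots> \<le> labs (T1 (a n)) + labs (T2 (a n))" by (rule labs_add)
      finally show "labs (y n) \<le> labs (T1 (a n)) + labs (T2 (a n))" .
    qed
    have bB: "\<forall>n. T1 (a n) \<in> blinfun_apply T1 ` A" using a by blast
    obtain z w :: "nat \<Rightarrow> 'a" where zw: "z \<longlonglongrightarrow> 0" "disjoint_seq w" "\<forall>n. 0 \<le> w n \<and> w n \<le> labs (T2 (a n))"
      "\<forall>n. norm (y n) \<le> norm (z n) + norm (w n)"
      using key[OF conjunct1[OF y] le B1 bB] by blast
    have "w n \<in> sol (blinfun_apply T2 ` A)" for n
      unfolding sol_def
    proof (rule UN_I[of "T2 (a n)"])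
      show "blinfun_apply T2 (a n) \<in> blinfun_apply T2 ` A" using a by blast
      have "- labs (T2 (a n)) \<le> 0" using labs_nonneg[of "T2 (a n)"] by simp
      then show "w n \<in> {ya. - labs (T2 (a n)) \<le> ya \<and> ya \<le> labs (T2 (a n))}"
        using zw(3) order_trans by blast
    qed
    hence "w \<longlonglongrightarrow> 0" using B2 zw(2) unfolding Lwc_set_def by blast
    have "(\<lambda>n. norm (z n) + norm (w n)) \<longlonglongrightarrow> 0"
      using tendsto_add_zero[OF tendsto_norm_zero[OF zw(1)] tendsto_norm_zero[OF \<open>w \<longlonglongrightarrow> 0\<close>]] .
    thus "y \<longlonglongrightarrow> 0"
      by (rule Lim_null_comparison[rotated]) (use zw(4) in auto)
  qed
qed

lemma scale_closed:
  assumes T: "T \<in> lLwc" shows "c *\<^sub>R T \<in> lLwc"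
  unfolding lLwc_iff
proof (intro allI impI)
  fix A :: "'a set" assume A: "limited_set A"
  have "limited_set ((\<lambda>x. c *\<^sub>R x) ` A)"
    using limited_image[OF bounded_linear_scaleR_right A] .
  hence "Lwc_set (blinfun_apply T ` ((\<lambda>x. c *\<^sub>R x) ` A))" using T lLwc_iff by blast
  moreover have "blinfun_apply T ` ((\<lambda>x. c *\<^sub>R x) ` A) = blinfun_apply (c *\<^sub>R T) ` A"
    by (simp add: image_image blinfun.scaleR_right scaleR_blinfun.rep_eq)
  ultimately show "Lwc_set (blinfun_apply (c *\<^sub>R T) ` A)" by simp
qed

lemma zero_in: "(0 :: 'a::banach_lattice \<Rightarrow>\<^sub>L 'a) \<in> lLwc"
  unfolding lLwc_iff Lwc_set_def
proof (intro allI impI)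
  fix A :: "'a set" and y :: "nat \<Rightarrow> 'a"
  assume "disjoint_seq y \<and> (\<forall>n. y n \<in> sol (blinfun_apply 0 ` A))"
  hence "\<forall>n. y n = 0"
  proof (intro allI)
    fix n
    assume H: "disjoint_seq y \<and> (\<forall>n. y n \<in> sol (blinfun_apply 0 ` A))"
    have l0: "labs (0::'a) = 0" by (simp add: labs_def)
    obtain w where "w \<in> blinfun_apply 0 ` A" "- labs w \<le> y n" "y n \<le> labs w"
      using H unfolding sol_def by blast
    thus "y n = 0" using l0 by (auto simp: antisym)
  qed
  hence "y = (\<lambda>n. 0)" by auto
  thus "y \<longlonglongrightarrow> 0" by simp
qed

lemma closed_lLwc: "closed (lLwc :: ('a::banach_lattice \<Rightarrow>\<^sub>L 'a) set)"
  unfolding closed_sequential_limits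
proof (intro allI impI)
  fix Tk :: "nat \<Rightarrow> 'a \<Rightarrow>\<^sub>L 'a" and T
  assume H: "(\<forall>n. Tk n \<in> lLwc) \<and> Tk \<longlonglongrightarrow> T"
  show "T \<in> lLwc"
    unfolding lLwc_iff
  proof (intro allI impI)
    fix A :: "'a set" assume A: "limited_set A"
    obtain M where M: "M > 0" "\<forall>x\<in>A. norm x \<le> M"
      using A unfolding limited_set_def using bounded_pos by blast
    show "Lwc_set (blinfun_apply T ` A)"
      unfolding Lwc_set_def
    proof (intro allI impI)
      fix y assume y: "disjoint_seq y \<and> (\<forall>n. y n \<in> sol (blinfun_apply T ` A))"
      then obtain a where a: "\<forall>n. a n \<in> A \<and> labs (y n) \<le> labs (blinfun_apply T (a n))"
        using sol_pick by blast
      show "y \<longlonglongrightarrow> 0"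
        unfolding LIMSEQ_iff
      proof (intro allI impI)
        fix r :: real assume r: "0 < r"
        have rM: "r / (2*M) > 0" using r M by simp
        obtain k where k: "norm (Tk k - T) < r / (2*M)"
          using H rM unfolding LIMSEQ_iff by blast
        have le: "\<forall>n. labs (y n) \<le> labs (Tk k (a n)) + labs ((T - Tk k) (a n))"
        proof
          fix n
          have "blinfun_apply T (a n) = Tk k (a n) + (T - Tk k) (a n)"
            by (simp add: blinfun.diff_left)
          hence eq: "labs (blinfun_apply T (a n)) = labs (Tk k (a n) + (T - Tk k) (a n))" by simp
          have "labs (y n) \<le> labs (blinfun_apply T (a n))" using a by blast
          also have "\<dots> = labs (Tk k (a n) + (T - Tk k) (a n))" by (rule eq)
          also have "\<dots> \<le> labs (Tk k (a n)) + labs ((T - Tk k) (a n))" by (rule labs_add)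
          finally show "labs (y n) \<le> labs (Tk k (a n)) + labs ((T - Tk k) (a n))" .
        qed
        have B: "Lwc_set (blinfun_apply (Tk k) ` A)" using H A lLwc_iff by blast
        have bB: "\<forall>n. Tk k (a n) \<in> blinfun_apply (Tk k) ` A" using a by blast
        obtain z w :: "nat \<Rightarrow> 'a" where zw: "z \<longlonglongrightarrow> 0" "disjoint_seq w" "\<forall>n. 0 \<le> w n \<and> w n \<le> labs ((T - Tk k) (a n))"
          "\<forall>n. norm (y n) \<le> norm (z n) + norm (w n)"
          using key[OF conjunct1[OF y] le B bB] by blast
        obtain no where no: "\<forall>n\<ge>no. norm (z n - 0) < r/2"
          using zw(1) r unfolding LIMSEQ_iff by (meson half_gt_zero)
        show "\<exists>no. \<forall>n\<ge>no. norm (y n - 0) < r"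
        proof (intro exI allI impI)
          fix n assume "no \<le> n"
          have "norm (w n) \<le> norm ((T - Tk k) (a n))"
            using zw(3) by (simp add: norm_mono_labs labs_of_nonneg)
          also have "\<dots> \<le> norm (T - Tk k) * norm (a n)" by (rule norm_blinfun)
          also have "\<dots> \<le> norm (T - Tk k) * M" using M a by (simp add: mult_left_mono)
          also have "\<dots> < r / (2*M) * M"
            using k by (intro mult_strict_right_mono M(1)) (simp add: norm_minus_commute)
          also have "\<dots> = r/2" using M by simp
          finally have "norm (w n) < r/2" .
          moreover have "norm (z n) < r/2" using no \<open>no \<le> n\<close> by simp
          moreover have "norm (y n) \<le> norm (z n) + norm (w n)" using zw(4) by blast
          ultimately show "norm (y n - 0) < r" by simp
        qed
      qed
    qed
  qed
qed

theorem corollary3p3: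
  shows "subspace (lLwc :: ('a::banach_lattice \<Rightarrow>\<^sub>L 'a) set)
    \<and> closed (lLwc :: ('a \<Rightarrow>\<^sub>L 'a) set)
    \<and> (\<forall>T\<in>(lLwc :: ('a \<Rightarrow>\<^sub>L 'a) set). \<forall>S. T o\<^sub>L S \<in> lLwc)
    \<and> (\<forall>T\<in>(lLwc :: ('a \<Rightarrow>\<^sub>L 'a) set). \<forall>S\<in>lLwc. T o\<^sub>L S \<in> lLwc)
    \<and> ((id_blinfun :: 'a \<Rightarrow>\<^sub>L 'a) \<in> lLwc \<longleftrightarrow> limitedly_L_weakly_compact (id :: 'a \<Rightarrow> 'a))"
proof (intro conjI)
  show "subspace (lLwc :: ('a::banach_lattice \<Rightarrow>\<^sub>L 'a) set)"
    unfolding subspace_def using zero_in add_closed scale_closed by blast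
  show "closed (lLwc :: ('a \<Rightarrow>\<^sub>L 'a) set)" by (rule closed_lLwc)
  show "\<forall>T\<in>(lLwc :: ('a \<Rightarrow>\<^sub>L 'a) set). \<forall>S. T o\<^sub>L S \<in> lLwc" using comp_closed by blast
  thus "\<forall>T\<in>(lLwc :: ('a \<Rightarrow>\<^sub>L 'a) set). \<forall>S\<in>lLwc. T o\<^sub>L S \<in> lLwc" by blast
  show "((id_blinfun :: 'a \<Rightarrow>\<^sub>L 'a) \<in> lLwc \<longleftrightarrow> limitedly_L_weakly_compact (id :: 'a \<Rightarrow> 'a))"
    by (simp add: lLwc_def id_blinfun.rep_eq id_def)
qed

end
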